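(* Let $i,i+(r-a),\ldots,i+s(r-a)$ be an $L$-brick. The restriction of the divisor $Z_{i+s(r-a)}$ to the $L$-resolution is equal to the divisor $Z^L_i$. If $i,i+a,\ldots,i+sa$ is an $R$-brick, then the restriction of the divisor $Z_i$ to the $R$-resolution is equal to the divisor $Z^R_i$.
   Context: Let $0<a<r$ be coprime integers, $b$ the inverse of $a$ modulo $r$, and for integers $s,t$ let $(s \bmod t)$ denote the least non-negative integer $u$ with $t\mid s-u$. Let $N=\mathbb{Z}^3+\mathbb{Z}\frac1r(1,a,r-a)$, and $p_i=\frac1r\big((-ib \bmod r),\,r-i,\,i\big)$ for $i=0,\ldots,r$ (so $p_0=e_2$, $p_r=e_3$, $p_{r-a}=\frac1r(1,a,r-a)$). The Danilov resolution of the toric singularity $\frac1r(1,a,r-a)$ (cone $\langle e_1,e_2,e_3\rangle$ in $N$) is obtained by the weighted blow-up at $p_{r-a}$ followed recursively by the Danilov resolutions of the cones $\langle e_1,e_2,p_{r-a}\rangle$ and $\langle e_1,e_3,p_{r-a}\rangle$, which are toric singularities of type $\frac{1}{r-a}(1,(r \bmod (r-a)),(-r \bmod (r-a)))$ and $\frac1a(1,(-r \bmod a),(r \bmod a))$ respectively (via lattice isomorphisms fixing $e_1$ and sending the last, resp. second, basis vector to $p_{r-a}$). The resolutions of these two subcones are called the $L$-resolution and the $R$-resolution. Let $D_k$ be the toric divisor of the ray through $p_k$. The permutation $\tau(r,a,\cdot)$ of $\{0,\ldots,r-1\}$ is defined recursively: if $a\in\{1,r-1\}$, $\tau(r,a,i)=(ai-1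 \bmod r)$; otherwise $\tau(r,a,i)=\tau(r-a,(r\bmod (r-a)),(i \bmod (r-a)))$ if $i\ge a$, and $\tau(r,a,i)=(r-a)+\tau(a,(-r \bmod a),i)$ if $i<a$. Set $Z_i=\sum_{k=\tau(r,a,i)+1}^{r}D_k$ for $i=0,\ldots,r-1$. The divisors $Z^L_i$ (resp. $Z^R_i$) on the $L$- (resp. $R$-)resolution are defined by the same formula with $(r,a)$ replaced by $(r-a,(r\bmod(r-a)))$ (resp. $(a,(-r\bmod a))$). A sequence $i,i+(r-a),\ldots,i+s(r-a)$ is an $L$-brick if $i<r-a$, $i+(s+1)(r-a)>r$ and every term is $<r$; a sequence $i,i+a,\ldots,i+sa$ is an $R$-brick if $i<a$, $i+(s+1)a>r$ and every term is $<r$. *)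

theory Defs
  imports Complex_Main
begin

type_synonym vec = "rat \<times> rat \<times> rat"

definition e1 :: vec where "e1 = (1, 0, 0)"
definition e2 :: vec where "e2 = (0, 1, 0)"
definition e3 :: vec where "e3 = (0, 0, 1)"

definition inv_mod :: "nat \<Rightarrow> nat \<Rightarrow> nat" where
  "inv_mod r a = (THE b. b < r \<and> (a * b) mod r = 1 mod r)"

definition pt :: "nat \<Rightarrow> nat \<Rightarrow> nat \<Rightarrow> vec" where
  "pt r a k = (of_int ((- int k * int (inv_mod r a)) mod int r) / of_nat r,
               (of_int (int r - int k)) / of_nat r,
               of_nat k / of_nat r)"

definition aL :: "nat \<Rightarrow> nat \<Rightarrow> nat" where "aL r a = r mod (r - a)"
definition aR :: "nat \<Rightarrow> nat \<Rightarrow> nat" where "aR r a = nat ((- int r) mod int a)"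

text \<open>Lattice isomorphisms onto the L-cone <e1,e2,p_{r-a}> (e1,e2 fixed, e3 to p_{r-a})
  and onto the R-cone <e1,e3,p_{r-a}> (e1,e3 fixed, e2 to p_{r-a}), p_{r-a} = 1/r(1,a,r-a).\<close>
definition phiL :: "nat \<Rightarrow> nat \<Rightarrow> vec \<Rightarrow> vec" where
  "phiL r a w = (case w of (x, y, z) \<Rightarrow>
     (x + z / of_nat r, y + z * of_nat a / of_nat r, z * of_nat (r - a) / of_nat r))"

definition phiR :: "nat \<Rightarrow> nat \<Rightarrow> vec \<Rightarrow> vec" where
  "phiR r a w = (case w of (x, y, z) \<Rightarrow>
     (x + y / of_nat r, y * of_nat a / of_nat r, z + y * of_nat (r - a) / of_nat r))"

text \<open>The Danilov resolution of 1/r(1,a,r-a), as its set of maximal cones, each cone given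
  by its set of ray generators. If the cone is smooth (r = 1, or degenerate input) it is the
  cone itself; otherwise weighted blow-up at p_{r-a} gives the smooth cone <e2,e3,p_{r-a}>
  together with the (transported) Danilov resolutions of the L- and R-cones.\<close>
function danilov_fan :: "nat \<Rightarrow> nat \<Rightarrow> vec set set" where
  "danilov_fan r a =
    (if 0 < a \<and> a < r then
       {{e2, e3, pt r a (r - a)}}
       \<union> (\<lambda>C. phiL r a ` C) ` danilov_fan (r - a) (aL r a)
       \<union> (\<lambda>C. phiR r a ` C) ` danilov_fan a (aR r a)
     else {{e1, e2, e3}})"
  by pat_completeness auto
termination
  by (relation "measure (\<lambda>(r, a). r)") auto

definition fan_rays :: "vec set set \<Rightarrow> vec set" where
  "fan_rays F = \<Union> F"

function tau :: "nat \<Rightarrow> nat \<Rightarrow> nat \<Rightarrow> nat" where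
  "tau r a i =
    (if a = 1 \<or> a = r - 1 then nat ((int a * int i - 1) mod int r)
     else if 0 < a \<and> a < r then
       (if a \<le> i then tau (r - a) (r mod (r - a)) (i mod (r - a))
        else (r - a) + tau a (nat ((- int r) mod int a)) i)
     else 0)"
  by pat_completeness auto
termination
  by (relation "measure (\<lambda>(r, a, i). r)") auto

text \<open>Toric divisors on the Danilov resolution of 1/r(1,a,r-a), represented by their
  coefficient at each ray (ray identified with its primitive generator).\<close>
definition Ddiv :: "nat \<Rightarrow> nat \<Rightarrow> nat \<Rightarrow> vec \<Rightarrow> int" where
  "Ddiv r a k = (\<lambda>v. if v = pt r a k then 1 else 0)"

definition Zdiv :: "nat \<Rightarrow> nat \<Rightarrow> nat \<Rightarrow> vec \<Rightarrow> int" where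
  "Zdiv r a i = (\<lambda>v. \<Sum>k\<in>{tau r a i + 1..r}. Ddiv r a k v)"

definition L_brick :: "nat \<Rightarrow> nat \<Rightarrow> nat \<Rightarrow> nat \<Rightarrow> bool" where
  "L_brick r a i s \<longleftrightarrow> i < r - a \<and> i + (s + 1) * (r - a) > r \<and> (\<forall>t\<le>s. i + t * (r - a) < r)"

definition R_brick :: "nat \<Rightarrow> nat \<Rightarrow> nat \<Rightarrow> nat \<Rightarrow> bool" where
  "R_brick r a i s \<longleftrightarrow> i < a \<and> i + (s + 1) * a > r \<and> (\<forall>t\<le>s. i + t * a < r)"

text \<open>Restriction of a divisor on the Danilov resolution of 1/r(1,a,r-a) to the open
  L- (resp. R-) resolution, expressed on the rays of that resolution in its own lattice
  (transported through phiL, resp. phiR): a toric divisor restricts to the open toric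
  subvariety by keeping the coefficients of the rays of the subfan.\<close>
definition restrL :: "nat \<Rightarrow> nat \<Rightarrow> (vec \<Rightarrow> int) \<Rightarrow> vec \<Rightarrow> int" where
  "restrL r a D = (\<lambda>w. D (phiL r a w))"

definition restrR :: "nat \<Rightarrow> nat \<Rightarrow> (vec \<Rightarrow> int) \<Rightarrow> vec \<Rightarrow> int" where
  "restrR r a D = (\<lambda>w. D (phiR r a w))"

end

theory Submission
  imports Defs "HOL-Number_Theory.Cong"
begin

declare danilov_fan.simps[simp del] tau.simps[simp del]

lemma inv_mod_prop:
  assumes "0 < r" "coprime a r"
  shows "inv_mod r a < r \<and> [a * inv_mod r a = 1] (mod r)"
proof -
  obtain x where x: "[a * x = 1] (mod r)" using cong_solve_coprime_nat[OF assms(2)] by auto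
  have ex: "x mod r < r \<and> (a * (x mod r)) mod r = 1 mod r"
    using x assms(1) by (simp add: cong_def mod_mult_right_eq)
  have uniq: "b1 = b2" if "b1 < r \<and> (a * b1) mod r = 1 mod r" "b2 < r \<and> (a * b2) mod r = 1 mod r" for b1 b2
  proof -
    have "[a * b1 = a * b2] (mod r)" using that by (simp add: cong_def)
    then have "[b1 = b2] (mod r)" using cong_mult_lcancel_nat assms(2) by blast
    then show ?thesis using that cong_less_modulus_unique_nat by blast
  qed
  have "\<exists>!b. b < r \<and> (a * b) mod r = 1 mod r" using ex uniq by blast
  then have "inv_mod r a < r \<and> (a * inv_mod r a) mod r = 1 mod r"
    unfolding inv_mod_def by (rule theI')
  then show ?thesis by (simp add: cong_def)
qed

lemma inv_mod_int:
  assumes "0 < r" "coprime a r"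
  shows "[int a * int (inv_mod r a) = 1] (mod int r)"
  using inv_mod_prop[OF assms] cong_int_iff[of "a * inv_mod r a" 1 r] by simp

lemma coprime_aL: assumes "0<a" "a<r" "coprime a r" shows "coprime (aL r a) (r - a)"
proof -
  have "coprime r (r - a)"
  proof (rule coprimeI)
    fix d assume d: "d dvd r" "d dvd r - a"
    then have "d dvd a" using dvd_diff_nat[of d r "r-a"] assms by simp
    then show "is_unit d" using assms(3) d coprime_common_divisor by blast
  qed
  then show ?thesis unfolding aL_def using assms by simp
qed

lemma coprime_aR: assumes "0<a" "a<r" "coprime a r" shows "coprime (aR r a) a"
proof -
  have "coprime (- int r) (int a)" using assms by (simp add: coprime_commute)
  then have "coprime ((- int r) mod int a) (int a)" using assms by simp
  then show ?thesis unfolding aR_def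
    by (metis coprime_int_iff nat_0_le of_nat_0_less_iff pos_mod_sign assms(1))
qed
lemma key_int:
  fixes R D K u c B B' :: int
  assumes "0 < D" "D < R" "0 \<le> K" "K \<le> D" "coprime R D"
    "[R * B' = 1] (mod D)" "[(R - D) * B = 1] (mod R)"
    "u = (- K * B') mod D" "c = (- K * B) mod R"
  shows "R * u + K = c * D"
proof -
  have h1: "D dvd u + K * B'"
  proof -
    have "[u = - K * B'] (mod D)" using assms(8) by (simp add: cong_def)
    then show ?thesis by (simp add: cong_iff_dvd_diff)
  qed
  have h2: "D dvd R * B' - 1" using assms(6) by (simp add: cong_iff_dvd_diff)
  have h3: "R dvd c + K * B"
  proof -
    have "[c = - K * B] (mod R)" using assms(9) by (simp add: cong_def)
    then show ?thesis by (simp add: cong_iff_dvd_diff)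
  qed
  have h4: "R dvd (R - D) * B - 1" using assms(7) by (simp add: cong_iff_dvd_diff)
  define X where "X = R * u + K - c * D"
  have e1: "X = R * (u + K * B') - K * (R * B' - 1) - c * D" unfolding X_def by (simp add: algebra_simps)
  have e2: "X = R * (u - c) + (R - D) * (c + K * B) - K * ((R - D) * B - 1)" unfolding X_def by (simp add: algebra_simps)
  have dD: "D dvd X" unfolding e1 using h1 h2 by simp
  have dR: "R dvd X" unfolding e2 using h3 h4 by simp
  have dRD: "R * D dvd X" using divides_mult[OF dR dD assms(5)] .
  have u0: "0 \<le> u" "u < D" using assms(1,8) by simp_all
  have c0: "0 \<le> c" "c < R" using assms(1,2,9) by simp_all
  have "R * u \<le> R * (D - 1)" using u0 assms(1,2) by (intro mult_left_mono) auto
  moreover have "c * D \<le> (R - 1) * D" using c0 assms(1) by (intro mult_right_mono) auto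
  moreover have "0 \<le> R * u" using u0 assms by simp
  moreover have "0 \<le> c * D" using c0 assms by simp
  ultimately have "\<bar>X\<bar> < R * D" unfolding X_def using assms(1-4) by (simp add: algebra_simps abs_less_iff)
  then have "X = 0" using dvd_imp_le_int[OF _ dRD] assms(1,2) by fastforce
  then show ?thesis unfolding X_def by simp
qed
lemma key_int_R:
  fixes R A K u c B B' :: int
  assumes "0 < A" "A < R" "0 \<le> K" "K \<le> A" "coprime R A"
    "[(- R) * B' = 1] (mod A)" "[A * B = 1] (mod R)"
    "u = (- K * B') mod A" "c = (- (R - A + K) * B) mod R"
  shows "R * u + A - K = c * A"
proof -
  have h1: "A dvd u + K * B'"
  proof -
    have "[u = - K * B'] (mod A)" using assms(8) by (simp add: cong_def)
    then show ?thesis by (simp add: cong_iff_dvd_diff)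
  qed
  have h2: "A dvd R * B' + 1"
  proof -
    have "A dvd (- R) * B' - 1" using assms(6) by (simp add: cong_iff_dvd_diff)
    then have "A dvd - ((- R) * B' - 1)" by (simp only: dvd_minus_iff)
    moreover have "- ((- R) * B' - 1) = R * B' + 1" by simp
    ultimately show ?thesis by metis
  qed
  have h3: "R dvd c + (R - A + K) * B"
  proof -
    have "[c = - (R - A + K) * B] (mod R)" using assms(9) by (simp add: cong_def)
    then have "R dvd c - (- (R - A + K) * B)" by (simp only: cong_iff_dvd_diff)
    moreover have "c - (- (R - A + K) * B) = c + (R - A + K) * B" by (simp add: algebra_simps)
    ultimately show ?thesis by metis
  qed
  have h4: "R dvd A * B - 1" using assms(7) by (simp add: cong_iff_dvd_diff)
  define X where "X = R * u + A - K - c * A"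
  have e1: "X = R * (u + K * B') - K * (R * B' + 1) + A * (1 - c)" unfolding X_def by (simp add: algebra_simps)
  have e2: "X = R * (u + 1) - A * (c + (R - A + K) * B) + (R - A + K) * (A * B - 1)" unfolding X_def by (simp add: algebra_simps)
  have dD: "A dvd X" unfolding e1 using h1 h2 by simp
  have dR: "R dvd X" unfolding e2 using h3 h4 by simp
  have dRD: "R * A dvd X" using divides_mult[OF dR dD assms(5)] .
  have u0: "0 \<le> u" "u < A" using assms(1,8) by simp_all
  have c0: "0 \<le> c" "c < R" using assms(1,2,9) by simp_all
  have "R * u \<le> R * (A - 1)" using u0 assms(1,2) by (intro mult_left_mono) auto
  moreover have "c * A \<le> (R - 1) * A" using c0 assms(1) by (intro mult_right_mono) auto
  moreover have "0 \<le> R * u" using u0 assms by simp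
  moreover have "0 \<le> c * A" using c0 assms by simp
  ultimately have "\<bar>X\<bar> < R * A" unfolding X_def using assms(1-4) by (simp add: algebra_simps abs_less_iff)
  then have "X = 0" using dvd_imp_le_int[OF _ dRD] assms(1,2) by fastforce
  then show ?thesis unfolding X_def by simp
qed
lemma coprime_r_ra: assumes "0<(a::nat)" "a<r" "coprime a r" shows "coprime r (r - a)"
proof (rule coprimeI)
  fix d :: nat assume d: "d dvd r" "d dvd r - a"
  then have "d dvd a" using dvd_diff_nat[of d r "r-a"] assms by simp
  then show "is_unit d" using assms(3) d coprime_common_divisor by blast
qed

lemma phiL_pt:
  assumes "0<a" "a<r" "coprime a r" "k \<le> r - a"
  shows "phiL r a (pt (r - a) (aL r a) k) = pt r a k"
proof -
  define d :: nat where "d = r - a"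
  define b :: nat where "b = inv_mod r a"
  define b' :: nat where "b' = inv_mod d (aL r a)"
  define u :: int where "u = (- int k * int b') mod int d"
  define c :: int where "c = (- int k * int b) mod int r"
  have d0: "0 < d" using assms d_def by simp
  have i1: "[int (aL r a) * int b' = 1] (mod int d)"
    unfolding b'_def using inv_mod_int[OF d0] coprime_aL[OF assms(1-3)] d_def by simp
  have "int (aL r a) = int r mod int d" by (simp add: aL_def d_def of_nat_mod)
  then have i1': "[int r * int b' = 1] (mod int d)" using i1 by (simp add: cong_def mod_mult_left_eq)
  have i2: "[int a * int b = 1] (mod int r)" unfolding b_def using inv_mod_int assms by simp
  have ia: "int a = int r - int d" using assms d_def by simp
  have i2': "[(int r - int d) * int b = 1] (mod int r)" using i2 ia by simp
  have cop: "coprime (int r) (int d)" using coprime_r_ra[OF assms(1-3)] d_def by simp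
  have key: "int r * u + int k = c * int d"
    by (rule key_int[OF _ _ _ _ cop i1' i2' u_def c_def]) (use assms d_def in auto)
  then have keyq: "of_int u * rat_of_nat r + rat_of_nat k = of_int c * rat_of_nat d"
    by (metis (mono_tags) of_int_add of_int_mult of_int_of_nat_eq mult.commute)
  have r0: "rat_of_nat r \<noteq> 0" "rat_of_nat d \<noteq> 0" using d0 assms by auto
  have dq: "rat_of_nat d = rat_of_nat r - rat_of_nat a" using assms d_def by (simp add: of_nat_diff)
  show ?thesis
    unfolding pt_def phiL_def d_def[symmetric] b_def[symmetric] b'_def[symmetric] u_def[symmetric] c_def[symmetric]
    using keyq r0 dq apply (simp add: field_simps)
    apply (intro conjI)
    subgoal using arg_cong[OF keyq, of "\<lambda>x. x * rat_of_nat r"] by (simp add: algebra_simps)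
    subgoal using dq by (simp add: algebra_simps flip: distrib_right)
    done
qed
lemma phiR_pt:
  assumes "0<a" "a<r" "coprime a r" "k \<le> a"
  shows "phiR r a (pt a (aR r a) k) = pt r a (r - a + k)"
proof -
  define b :: nat where "b = inv_mod r a"
  define b' :: nat where "b' = inv_mod a (aR r a)"
  define u :: int where "u = (- int k * int b') mod int a"
  define c :: int where "c = (- (int r - int a + int k) * int b) mod int r"
  have i1: "[int (aR r a) * int b' = 1] (mod int a)"
    unfolding b'_def using inv_mod_int[OF assms(1)] coprime_aR[OF assms(1-3)] by simp
  have "int (aR r a) = (- int r) mod int a" using assms(1) by (simp add: aR_def)
  then have i1': "[(- int r) * int b' = 1] (mod int a)" using i1 by (simp add: cong_def mod_mult_left_eq)
  have i2: "[int a * int b = 1] (mod int r)" unfolding b_def using inv_mod_int assms by simp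
  have cop: "coprime (int r) (int a)" using assms by (simp add: coprime_commute)
  have key: "int r * u + int a - int k = c * int a"
    by (rule key_int_R[OF _ _ _ _ cop i1' i2 u_def c_def]) (use assms in auto)
  then have keyq: "of_int u * rat_of_nat r + rat_of_nat a - rat_of_nat k = of_int c * rat_of_nat a"
    by (metis (mono_tags) of_int_add of_int_diff of_int_mult of_int_of_nat_eq mult.commute)
  have r0: "rat_of_nat r \<noteq> 0" "rat_of_nat a \<noteq> 0" using assms by auto
  have ce: "c = (- int (r - a + k) * int b) mod int r" unfolding c_def using assms by (simp add: algebra_simps)
  have e3: "int r - int (r - a + k) = int a - int k" using assms by simp
  show ?thesis
    unfolding pt_def phiR_def b_def[symmetric] b'_def[symmetric] u_def[symmetric] ce[symmetric] e3
    using keyq r0 assms apply (simp add: field_simps of_nat_diff)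
    apply (drule arg_cong[where f="\<lambda>x. x * (rat_of_nat a * rat_of_nat r)"])
    by (simp add: algebra_simps)
qed
lemma pt_0: "0 < r \<Longrightarrow> pt r a 0 = e2"
  by (simp add: pt_def e2_def)
lemma pt_r: "0 < r \<Longrightarrow> pt r a r = e3"
  by (simp add: pt_def e3_def)
lemma phiL_e1: "phiL r a e1 = e1" by (simp add: phiL_def e1_def)
lemma phiR_e1: "phiR r a e1 = e1" by (simp add: phiR_def e1_def)

lemma rays_char:
  "0 < r \<Longrightarrow> coprime a r \<Longrightarrow> v \<in> fan_rays (danilov_fan r a) \<Longrightarrow> v = e1 \<or> (\<exists>k\<le>r. v = pt r a k)"
proof (induction r a arbitrary: v rule: danilov_fan.induct)
  case (1 r a)
  show ?case
  proof (cases "0 < a \<and> a < r")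
    case True
    have dsimp: "danilov_fan r a = {{e2, e3, pt r a (r - a)}}
       \<union> (\<lambda>C. phiL r a ` C) ` danilov_fan (r - a) (aL r a)
       \<union> (\<lambda>C. phiR r a ` C) ` danilov_fan a (aR r a)"
      using True by (subst danilov_fan.simps) simp
    have cL: "coprime (aL r a) (r - a)" using coprime_aL True "1.prems" by blast
    have cR: "coprime (aR r a) a" using coprime_aR True "1.prems" by blast
    from "1.prems"(3) consider (a) "v \<in> {e2, e3, pt r a (r - a)}"
      | (b) w where "w \<in> fan_rays (danilov_fan (r - a) (aL r a))" "v = phiL r a w"
      | (c) w where "w \<in> fan_rays (danilov_fan a (aR r a))" "v = phiR r a w"
      unfolding dsimp fan_rays_def by blast
    then show ?thesis
    proof cases
      case a
      then show ?thesis using pt_0[of r a] pt_r[of r a] "1.prems" by (metis diff_le_self empty_iff insert_iff le_refl zero_le)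
    next
      case b
      have "w = e1 \<or> (\<exists>k\<le>r - a. w = pt (r - a) (aL r a) k)"
        using "1.IH"(1)[OF True _ cL b(1)] True by simp
      then show ?thesis
      proof
        assume "w = e1" then show ?thesis using b phiL_e1 by simp
      next
        assume "\<exists>k\<le>r - a. w = pt (r - a) (aL r a) k"
        then obtain k where k: "k \<le> r - a" "w = pt (r - a) (aL r a) k" by blast
        then have v: "v = pt r a k" using b phiL_pt True "1.prems" by simp
        have "k \<le> r" using k(1) by simp
        then show ?thesis using v by blast
      qed
    next
      case c
      have "w = e1 \<or> (\<exists>k\<le>a. w = pt a (aR r a) k)"
        using "1.IH"(2)[OF True _ cR c(1)] True by simp
      then show ?thesis
      proof
        assume "w = e1" then show ?thesis using c phiR_e1 by simp
      next
        assume "\<exists>k\<le>a. w = pt a (aR r a) k"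
        then obtain k where k: "k \<le> a" "w = pt a (aR r a) k" by blast
        then have v: "v = pt r a (r - a + k)" using c phiR_pt True "1.prems" by simp
        have "r - a + k \<le> r" using k(1) True by simp
        then show ?thesis using v by blast
      qed
    qed
  next
    case False
    have "danilov_fan r a = {{e1, e2, e3}}" by (subst danilov_fan.simps, rule if_not_P[OF False])
    then have "v \<in> {e1, e2, e3}" using "1.prems"(3) unfolding fan_rays_def by simp
    then show ?thesis using pt_0[of r a] pt_r[of r a] "1.prems"(1) by force
  qed
qed

lemma pt_inj: "0 < r \<Longrightarrow> pt r a k = pt r a k' \<Longrightarrow> k = k'"
  by (simp add: pt_def)

lemma pt_ne_e1: "0 < r \<Longrightarrow> pt r a k \<noteq> e1"
  by (auto simp add: pt_def e1_def)

lemma Zdiv_pt: "0 < r \<Longrightarrow> Zdiv r a i (pt r a k) = (if k \<in> {tau r a i + 1..r} then 1 else 0)"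
proof -
  assume r: "0 < r"
  have "Zdiv r a i (pt r a k) = (\<Sum>k'\<in>{tau r a i + 1..r}. if k' = k then 1 else 0)"
    unfolding Zdiv_def Ddiv_def using pt_inj[OF r] by (intro sum.cong) auto
  then show ?thesis by (simp add: sum.delta')
qed

lemma Zdiv_e1: "0 < r \<Longrightarrow> Zdiv r a i e1 = 0"
  unfolding Zdiv_def Ddiv_def using pt_ne_e1 by (simp add: eq_commute[of e1])
lemma modh: "0 \<le> (x::int) \<Longrightarrow> x < m \<Longrightarrow> y = x + m * q \<Longrightarrow> y mod m = x"
  by simp

lemma tau_base: "a = 1 \<or> a = r - 1 \<Longrightarrow> tau r a i = nat ((int a * int i - 1) mod int r)"
  by (subst tau.simps, rule if_P)

lemma tau_rec: "\<not> (a = 1 \<or> a = r - 1) \<Longrightarrow> 0 < a \<Longrightarrow> a < r \<Longrightarrow>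
  tau r a i = (if a \<le> i then tau (r - a) (r mod (r - a)) (i mod (r - a))
        else (r - a) + tau a (nat ((- int r) mod int a)) i)"
  by (subst tau.simps) (simp only: if_not_P if_P conj_absorb, simp)

lemma tauR:
  assumes "0 < a" "a < r" "i < a"
  shows "tau r a i = (r - a) + tau a (aR r a) i"
proof -
  consider (one) "a = 1" | (top) "a \<noteq> 1" "a = r - 1" | (gen) "a \<noteq> 1" "a \<noteq> r - 1" by blast
  then show ?thesis
  proof cases
    case one
    then have i0: "i = 0" using assms by simp
    have "(int 1 * int 0 - 1) mod int r = int r - 1"
      by (rule modh[where q="-1"]) (use assms in auto)
    then have l: "tau r a i = r - 1" using one i0 tau_base[of a r i] by simp
    have "aR r a = 0" using one by (simp add: aR_def)
    then have "tau a (aR r a) i = 0" using one i0 tau_base[of 0 1 0] by simp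
    then show ?thesis using l one by simp
  next
    case top
    then have r3: "3 \<le> r" using assms by linarith
    have "(- int r) mod int a = int r - 2"
      by (rule modh[where q="-2"]) (use assms top r3 in auto)
    then have aRv: "aR r a = r - 2" using r3 by (simp add: aR_def)
    have "(int a * int i - 1) mod int r = int r - 1 - int i"
      by (rule modh[where q="int i - 1"]) (use assms top r3 in \<open>auto simp: algebra_simps of_nat_diff\<close>)
    then have l: "tau r a i = r - 1 - i" using top assms tau_base[of a r i] by simp
    have "(int (r - 2) * int i - 1) mod int a = int r - 2 - int i"
      by (rule modh[where q="int i - 1"]) (use assms top r3 in \<open>auto simp: algebra_simps of_nat_diff\<close>)
    moreover have "r - 2 = a - 1" using top by simp
    ultimately have t1: "tau a (r - 2) i = nat (int r - 2 - int i)"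
      using tau_base[of "r-2" a i] by simp
    have "int r - 2 - int i = int (r - 2 - i)" using top assms r3 by linarith
    then have "tau a (aR r a) i = r - 2 - i" unfolding aRv t1 by (simp only: nat_int)
    moreover have "r - 1 - i = (r - a) + (r - 2 - i)" using top assms r3 by simp
    ultimately show ?thesis using l by simp
  next
    case gen
    have ni: "\<not> a \<le> i" using assms by simp
    have "tau r a i = (if a \<le> i then tau (r - a) (r mod (r - a)) (i mod (r - a))
        else (r - a) + tau a (nat ((- int r) mod int a)) i)"
      by (rule tau_rec) (use gen assms in auto)
    then have "tau r a i = (r - a) + tau a (nat ((- int r) mod int a)) i"
      by (simp only: if_not_P[OF ni])
    then show ?thesis by (simp add: aR_def)
  qed
qed
lemma tauL:
  assumes "0 < a" "a < r" "L_brick r a i s"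
  shows "tau r a (i + s * (r - a)) = tau (r - a) (aL r a) i"
proof -
  define j where "j = i + s * (r - a)"
  have hi: "i < r - a" and hb: "i + (s + 1) * (r - a) > r" and ht: "\<And>t. t \<le> s \<Longrightarrow> i + t * (r - a) < r"
    using assms(3) unfolding L_brick_def by auto
  have jr: "j < r" using ht[of s] j_def by simp
  have "(s + 1) * (r - a) = s * (r - a) + (r - a)" by simp
  then have ja: "a < j" using hb j_def assms by linarith
  consider (top) "a = r - 1" | (one) "a = 1" "a \<noteq> r - 1" | (gen) "a \<noteq> 1" "a \<noteq> r - 1" by blast
  then have "tau r a j = tau (r - a) (aL r a) i"
  proof cases
    case top
    then have "r - a = 1" using assms by simp
    then show ?thesis using hb ht[of s] by simp
  next
    case one
    then have r3: "3 \<le> r" using assms by linarith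
    have rr: "r = 1 + (r - 1)" using r3 by simp
    have "r mod (r - 1) = (1 + (r - 1)) mod (r - 1)" using rr by simp
    also have "\<dots> = 1 mod (r - 1)" by (rule mod_add_self2)
    also have "\<dots> = 1" using r3 by simp
    finally have "aL r a = 1" unfolding aL_def using one by simp
    then have rhs: "tau (r - a) (aL r a) i = nat ((int 1 * int i - 1) mod int (r - 1))"
      using tau_base[of 1 "r - 1" i] one by simp
    have lhs: "tau r a j = nat ((int 1 * int j - 1) mod int r)"
      using tau_base[of a r j] one by simp
    have ej: "int 1 * int j - 1 = int (j - 1)" using ja one by simp
    have mj: "(j - 1) mod r = j - 1" using jr by simp
    have lhs': "tau r a j = j - 1" unfolding lhs ej
      by (simp only: of_nat_mod[symmetric] mj nat_int)
    consider (s0) "s = 0" | (s1) "s = 1" | (s2) "2 \<le> s" by linarith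
    then show ?thesis
    proof cases
      case s0
      then have "j = i" using j_def by simp
      have i2: "2 \<le> i" "i < r" using ja one jr \<open>j = i\<close> by simp_all
      have e: "int 1 * int i - 1 = int (i - 1)" using i2 by simp
      have m: "(i - 1) mod (r - 1) = i - 1" using i2 by simp
      have "tau (r - a) (aL r a) i = i - 1" unfolding rhs e
        by (simp only: of_nat_mod[symmetric] m nat_int)
      then show ?thesis using lhs' \<open>j = i\<close> by simp
    next
      case s1
      then have i0: "i = 0" using ht[of 1] one by simp
      then have "j = r - 1" using j_def s1 one by simp
      have "(int 1 * int i - 1) mod int (r - 1) = int (r - 1) - 1"
        by (rule modh[where q="-1"]) (use i0 r3 in auto)
      then show ?thesis using rhs lhs' \<open>j = r - 1\<close> r3 by simp
    next
      case s2
      then show ?thesis using ht[of 2] one r3 by simp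
    qed
  next
    case gen
    have aj: "a \<le> j" using ja by simp
    have "tau r a j = (if a \<le> j then tau (r - a) (r mod (r - a)) (j mod (r - a))
        else (r - a) + tau a (nat ((- int r) mod int a)) j)"
      by (rule tau_rec) (use gen assms in auto)
    then have "tau r a j = tau (r - a) (r mod (r - a)) (j mod (r - a))"
      by (simp only: if_P[OF aj])
    moreover have "j mod (r - a) = i" using j_def hi by simp
    ultimately show ?thesis by (simp add: aL_def)
  qed
  then show ?thesis using j_def by simp
qed
theorem mainTheorem3:
  fixes r a :: nat
  assumes "0 < a" and "a < r" and "coprime a r"
  shows "(\<forall>i s. L_brick r a i s \<longrightarrow>
            (\<forall>w \<in> fan_rays (danilov_fan (r - a) (aL r a)).
               restrL r a (Zdiv r a (i + s * (r - a))) w = Zdiv (r - a) (aL r a) i w))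
       \<and> (\<forall>i s. R_brick r a i s \<longrightarrow>
            (\<forall>w \<in> fan_rays (danilov_fan a (aR r a)).
               restrR r a (Zdiv r a i) w = Zdiv a (aR r a) i w))"
proof (intro conjI allI impI ballI)
  fix i s w
  assume br: "L_brick r a i s" and w: "w \<in> fan_rays (danilov_fan (r - a) (aL r a))"
  have d0: "0 < r - a" "0 < r" using assms by auto
  have t: "tau r a (i + s * (r - a)) = tau (r - a) (aL r a) i" using tauL[OF assms(1,2) br] .
  from rays_char[OF d0(1) coprime_aL[OF assms] w]
  consider "w = e1" | k where "k \<le> r - a" "w = pt (r - a) (aL r a) k" by blast
  then show "restrL r a (Zdiv r a (i + s * (r - a))) w = Zdiv (r - a) (aL r a) i w"
  proof cases
    case 1
    then show ?thesis unfolding restrL_def using Zdiv_e1[OF d0(1)] Zdiv_e1[OF d0(2)] phiL_e1 by simp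
  next
    case 2
    then have "restrL r a (Zdiv r a (i + s * (r - a))) w = Zdiv r a (i + s * (r - a)) (pt r a k)"
      unfolding restrL_def using phiL_pt[OF assms] by simp
    then show ?thesis using 2 Zdiv_pt[OF d0(1)] Zdiv_pt[OF d0(2)] t by auto
  qed
next
  fix i s w
  assume br: "R_brick r a i s" and w: "w \<in> fan_rays (danilov_fan a (aR r a))"
  have d0: "0 < a" "0 < r" using assms by auto
  have ia: "i < a" using br unfolding R_brick_def by simp
  have t: "tau r a i = (r - a) + tau a (aR r a) i" using tauR[OF assms(1,2) ia] .
  from rays_char[OF d0(1) coprime_aR[OF assms] w]
  consider "w = e1" | k where "k \<le> a" "w = pt a (aR r a) k" by blast
  then show "restrR r a (Zdiv r a i) w = Zdiv a (aR r a) i w"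
  proof cases
    case 1
    then show ?thesis unfolding restrR_def using Zdiv_e1[OF d0(1)] Zdiv_e1[OF d0(2)] phiR_e1 by simp
  next
    case 2
    then have "restrR r a (Zdiv r a i) w = Zdiv r a i (pt r a (r - a + k))"
      unfolding restrR_def using phiR_pt[OF assms] by simp
    then show ?thesis using 2 Zdiv_pt[OF d0(1)] Zdiv_pt[OF d0(2)] t assms by auto
  qed
qed
end
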